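(* (a) Let $K$ be a division ring and $\sigma$ an automorphism of $K$ of finite order $n$ such that no $\sigma^i$ with $1\le i<n$ is an inner automorphism. Then in $K[t;\sigma]$ the set of right roots of $t^n-1$ is exactly $\Delta^\sigma(1)=\{\sigma(x)x^{-1}\mid 0\ne x\in K\}$, and no nonzero polynomial of degree $<n$ in $K[t;\sigma]$ vanishes at every element of $\Delta^\sigma(1)$ (so $t^n-1$ is the minimal polynomial of $\Delta^\sigma(1)$). (b) Let $K$ be a division ring of characteristic $p>0$ and $\delta$ a derivation of $K$ with $\delta^{p^n}=0$ and satisfying no nontrivial identity $\sum_{i=0}^{m}c_i\delta^i=0$ ($c_i\in K$, not all zero) with $m<p^n$. Then in $K[t;\delta]$ the set of right roots of $t^{p^n}$ is exactly $\Delta^\delta(0)=\{\delta(x)x^{-1}\mid 0\ne x\in K\}$, and no nonzero polynomial of degree $<p^n$ vanishes at every element of $\Delta^\delta(0)$.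
   Context: $K[t;\sigma]$ is the skew polynomial ring with $ta=\sigma(a)t$; $K[t;\delta]$ is the differential polynomial ring with $ta=at+\delta(a)$. For $f$ in such a ring $R$ and $a\in K$, $f(a)$ is the unique element of $K$ with $f-f(a)\in R(t-a)$; $a$ is a right root of $f$ if $f(a)=0$. *)

theory Defs
  imports "HOL-Computational_Algebra.Polynomial"
begin

text \<open>Polynomials over a division ring are represented by the type 'a poly, used
only for its additive structure (coefficients, degree, monomials); the
non-commutative skew multiplications are defined below.\<close>

definition ring_automorphism :: "('a::division_ring \<Rightarrow> 'a) \<Rightarrow> bool" where
  "ring_automorphism \<sigma> \<longleftrightarrow> bij \<sigma> \<and> (\<forall>x y. \<sigma> (x + y) = \<sigma> x + \<sigma> y)
     \<and> (\<forall>x y. \<sigma> (x * y) = \<sigma> x * \<sigma> y) \<and> \<sigma> 1 = 1"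

definition inner_automorphism :: "('a::division_ring \<Rightarrow> 'a) \<Rightarrow> bool" where
  "inner_automorphism \<tau> \<longleftrightarrow> (\<exists>c. c \<noteq> 0 \<and> (\<forall>x. \<tau> x = c * x * inverse c))"

definition derivation :: "('a::division_ring \<Rightarrow> 'a) \<Rightarrow> bool" where
  "derivation \<delta> \<longleftrightarrow> (\<forall>x y. \<delta> (x + y) = \<delta> x + \<delta> y)
     \<and> (\<forall>x y. \<delta> (x * y) = \<delta> x * y + x * \<delta> y)"

text \<open>Multiplication in K[t;sigma]: (a t^i)(b t^j) = a sigma^i(b) t^(i+j).\<close>
definition skew_mult :: "('a::division_ring \<Rightarrow> 'a) \<Rightarrow> 'a poly \<Rightarrow> 'a poly \<Rightarrow> 'a poly" where
  "skew_mult \<sigma> p q = (\<Sum>i\<le>degree p. \<Sum>j\<le>degree q.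
      monom (coeff p i * (\<sigma> ^^ i) (coeff q j)) (i + j))"

text \<open>Multiplication in K[t;delta]: t^i b = sum_k (i choose k) delta^(i-k)(b) t^k.\<close>
definition diff_mult :: "('a::division_ring \<Rightarrow> 'a) \<Rightarrow> 'a poly \<Rightarrow> 'a poly \<Rightarrow> 'a poly" where
  "diff_mult \<delta> p q = (\<Sum>i\<le>degree p. \<Sum>j\<le>degree q. \<Sum>k\<le>i.
      monom (coeff p i * of_nat (i choose k) * (\<delta> ^^ (i - k)) (coeff q j)) (k + j))"

definition skew_eval :: "('a::division_ring \<Rightarrow> 'a) \<Rightarrow> 'a poly \<Rightarrow> 'a \<Rightarrow> 'a" where
  "skew_eval \<sigma> f a = (THE b. \<exists>q. f - [:b:] = skew_mult \<sigma> q [:- a, 1:])"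

definition diff_eval :: "('a::division_ring \<Rightarrow> 'a) \<Rightarrow> 'a poly \<Rightarrow> 'a \<Rightarrow> 'a" where
  "diff_eval \<delta> f a = (THE b. \<exists>q. f - [:b:] = diff_mult \<delta> q [:- a, 1:])"

definition Delta_sigma_1 :: "('a::division_ring \<Rightarrow> 'a) \<Rightarrow> 'a set" where
  "Delta_sigma_1 \<sigma> = {\<sigma> x * inverse x | x. x \<noteq> 0}"

definition Delta_delta_0 :: "('a::division_ring \<Rightarrow> 'a) \<Rightarrow> 'a set" where
  "Delta_delta_0 \<delta> = {\<delta> x * inverse x | x. x \<noteq> 0}"

end

theory Submission
  imports Defs
begin


section \<open>Automorphisms\<close>

lemma ra_add: "ring_automorphism \<tau> \<Longrightarrow> \<tau> (x + y) = \<tau> x + \<tau> y"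
  by (simp add: ring_automorphism_def)
lemma ra_mult: "ring_automorphism \<tau> \<Longrightarrow> \<tau> (x * y) = \<tau> x * \<tau> y"
  by (simp add: ring_automorphism_def)
lemma ra_one: "ring_automorphism \<tau> \<Longrightarrow> \<tau> 1 = 1"
  by (simp add: ring_automorphism_def)
lemma ra_zero: "ring_automorphism \<tau> \<Longrightarrow> \<tau> 0 = 0"
  using ra_add[of \<tau> 0 0] by simp
lemma ra_minus: "ring_automorphism \<tau> \<Longrightarrow> \<tau> (- x) = - \<tau> x"
  using ra_add[of \<tau> x "-x"] ra_zero[of \<tau>] by (simp add: minus_unique)
lemma ra_diff: "ring_automorphism \<tau> \<Longrightarrow> \<tau> (x - y) = \<tau> x - \<tau> y"
  using ra_add[of \<tau> x "-y"] ra_minus[of \<tau> y] by simp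
lemma ra_inj: "ring_automorphism \<tau> \<Longrightarrow> \<tau> x = \<tau> y \<longleftrightarrow> x = y"
  unfolding ring_automorphism_def bij_def inj_def by blast
lemma ra_eq0: "ring_automorphism \<tau> \<Longrightarrow> \<tau> x = 0 \<longleftrightarrow> x = 0"
  using ra_inj[of \<tau> x 0] ra_zero[of \<tau>] by simp
lemma ra_surj: "ring_automorphism \<tau> \<Longrightarrow> \<exists>x. \<tau> x = y"
  unfolding ring_automorphism_def bij_def surj_def by metis
lemma ra_inverse: "ring_automorphism \<tau> \<Longrightarrow> \<tau> (inverse x) = inverse (\<tau> x)"
proof (cases "x = 0")
  case True
  assume "ring_automorphism \<tau>" then show ?thesis using True ra_zero[of \<tau>] by simp
next
  case False
  assume a: "ring_automorphism \<tau>"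
  have "\<tau> x * \<tau> (inverse x) = 1" using ra_mult[OF a, of x "inverse x"] ra_one[OF a] False by simp
  then show ?thesis by (metis inverse_unique)
qed
lemma ra_pow: "ring_automorphism \<sigma> \<Longrightarrow> ring_automorphism (\<sigma> ^^ k)"
proof (induction k)
  case 0 then show ?case by (auto simp: ring_automorphism_def bij_def inj_def surj_def)
next
  case (Suc k)
  then have a: "ring_automorphism (\<sigma> ^^ k)" by simp
  show ?case using Suc.prems a unfolding ring_automorphism_def
    by (auto intro: bij_comp simp: funpow_Suc_right simp del: funpow.simps)
qed

section \<open>Skew polynomials\<close>

lemma skew_coeff:
  assumes a: "ring_automorphism \<sigma>"
  shows "coeff (skew_mult \<sigma> p [:-a,1:]) m
       = (if m = 0 then 0 else coeff p (m-1)) - coeff p m * (\<sigma>^^m) a"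
proof -
  have e: "skew_mult \<sigma> p [:-a,1:] = (\<Sum>i\<le>degree p. monom (coeff p i * (\<sigma>^^i) (-a)) i
            + monom (coeff p i) (Suc i))"
    unfolding skew_mult_def using ra_one[OF ra_pow[OF a]]
    by (simp add: numeral_2_eq_2)
  show ?thesis
  proof (cases m)
    case 0 then show ?thesis unfolding e
      by (auto simp: coeff_sum ra_minus[OF ra_pow[OF a]] coeff_eq_0)
  next
    case (Suc m') then show ?thesis unfolding e
      by (auto simp: coeff_sum sum.distrib ra_minus[OF ra_pow[OF a]] coeff_eq_0)
  qed
qed

lemma skew_mult_zero: "skew_mult \<sigma> 0 r = 0" by (simp add: skew_mult_def)

lemma skew_mult_add: "ring_automorphism \<sigma> \<Longrightarrow>
   skew_mult \<sigma> (p + q) [:-a,1:] = skew_mult \<sigma> p [:-a,1:] + skew_mult \<sigma> q [:-a,1:]"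
  by (rule poly_eqI) (simp add: skew_coeff algebra_simps)

lemma skew_degree: "ring_automorphism \<sigma> \<Longrightarrow> degree (skew_mult \<sigma> q [:-a,1:]) \<le> Suc (degree q)"
  by (rule degree_le) (auto simp: skew_coeff coeff_eq_0)

lemma skew_div_exists: "ring_automorphism \<sigma> \<Longrightarrow> \<exists>q b. f = skew_mult \<sigma> q [:-a,1:] + [:b:]"
proof (induction "degree f" arbitrary: f rule: less_induct)
  case less
  show ?case
  proof (cases "degree f = 0")
    case True
    then obtain b where "f = [:b:]" using degree0_coeffs by blast
    then show ?thesis by (intro exI[of _ 0] exI[of _ b]) (simp add: skew_mult_zero)
  next
    case False
    define d where "d = degree f"
    define c where "c = coeff f d"
    define g where "g = f - skew_mult \<sigma> (monom c (d - 1)) [:-a,1:]"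
    have d0: "d > 0" using False d_def by simp
    have "degree g \<le> d - 1"
    proof (rule degree_le, intro allI impI)
      fix m assume m: "m > d - 1"
      then have md: "m \<ge> d" using d0 by linarith
      show "coeff g m = 0"
      proof (cases "m = d")
        case True
        then show ?thesis using d0 unfolding g_def c_def
          by (auto simp: skew_coeff[OF less.prems])
      next
        case False
        then have "m > d" using md by simp
        then show ?thesis using d0 unfolding g_def c_def
          by (simp add: skew_coeff[OF less.prems] coeff_eq_0 d_def)
      qed
    qed
    then have "degree g < degree f" using False d_def by linarith
    then obtain q b where "g = skew_mult \<sigma> q [:-a,1:] + [:b:]" using less.hyps[OF _ less.prems] by blast
    then have "f = skew_mult \<sigma> (q + monom c (d-1)) [:-a,1:] + [:b:]"
      unfolding g_def by (simp add: skew_mult_add[OF less.prems] algebra_simps)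
    then show ?thesis by blast
  qed
qed

fun Ns :: "('a::division_ring \<Rightarrow> 'a) \<Rightarrow> 'a \<Rightarrow> nat \<Rightarrow> 'a" where
  "Ns \<sigma> a 0 = 1"
| "Ns \<sigma> a (Suc k) = (\<sigma>^^k) a * Ns \<sigma> a k"

definition Es :: "('a::division_ring \<Rightarrow> 'a) \<Rightarrow> 'a \<Rightarrow> 'a poly \<Rightarrow> 'a" where
  "Es \<sigma> a f = (\<Sum>i\<le>degree f. coeff f i * Ns \<sigma> a i)"

lemma Es_bound: "degree f \<le> N \<Longrightarrow> Es \<sigma> a f = (\<Sum>i\<le>N. coeff f i * Ns \<sigma> a i)"
  unfolding Es_def by (rule sum.mono_neutral_left) (auto simp: coeff_eq_0)

lemma Es_add: "Es \<sigma> a (f + g) = Es \<sigma> a f + Es \<sigma> a g"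
proof -
  let ?N = "max (degree f) (degree g)"
  have "degree (f + g) \<le> ?N" by (rule degree_add_le_max)
  then show ?thesis
    by (simp add: Es_bound[of _ ?N] distrib_right sum.distrib)
qed

lemma Es_diff: "Es \<sigma> a (f - g) = Es \<sigma> a f - Es \<sigma> a g"
proof -
  let ?N = "max (degree f) (degree g)"
  have "degree (f - g) \<le> ?N" by (rule degree_diff_le_max)
  then show ?thesis
    by (simp add: Es_bound[of _ ?N] left_diff_distrib sum_subtractf)
qed

lemma Es_const: "Es \<sigma> a [:b:] = b" by (simp add: Es_def)

lemma Es_monom: "Es \<sigma> a (monom c n) = c * Ns \<sigma> a n"
proof -
  have "Es \<sigma> a (monom c n) = (\<Sum>i\<le>n. (if n = i then c * Ns \<sigma> a n else 0))"
    by (rule trans[OF Es_bound[OF degree_monom_le]], rule sum.cong) auto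
  then show ?thesis by simp
qed

lemma Es_skew_zero:
  assumes a: "ring_automorphism \<sigma>"
  shows "Es \<sigma> a (skew_mult \<sigma> q [:-a,1:]) = 0"
proof -
  let ?D = "Suc (degree q)"
  have "Es \<sigma> a (skew_mult \<sigma> q [:-a,1:]) = (\<Sum>m\<le>?D. coeff (skew_mult \<sigma> q [:-a,1:]) m * Ns \<sigma> a m)"
    by (rule Es_bound[OF skew_degree[OF a]])
  also have "\<dots> = (\<Sum>m\<le>?D. (if m=0 then 0 else coeff q (m-1)) * Ns \<sigma> a m)
        - (\<Sum>m\<le>?D. coeff q m * (\<sigma>^^m) a * Ns \<sigma> a m)"
    by (simp add: skew_coeff[OF a] left_diff_distrib sum_subtractf)
  also have "(\<Sum>m\<le>?D. (if m=0 then 0 else coeff q (m-1)) * Ns \<sigma> a m)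
      = (\<Sum>i\<le>degree q. coeff q i * Ns \<sigma> a (Suc i))"
    by (simp only: sum.atMost_Suc_shift) simp
  also have "(\<Sum>m\<le>?D. coeff q m * (\<sigma>^^m) a * Ns \<sigma> a m) = (\<Sum>i\<le>degree q. coeff q i * Ns \<sigma> a (Suc i))"
    by (simp add: coeff_eq_0 mult.assoc)
  finally show ?thesis by simp
qed

lemma skew_eval_eq:
  assumes a: "ring_automorphism \<sigma>"
  shows "skew_eval \<sigma> f a = Es \<sigma> a f"
  unfolding skew_eval_def
proof (rule the_equality)
  obtain q b where qb: "f = skew_mult \<sigma> q [:-a,1:] + [:b:]" using skew_div_exists[OF a] by blast
  have "Es \<sigma> a f = b" by (subst qb) (simp add: Es_add Es_skew_zero[OF a] Es_const)
  then show "\<exists>q. f - [:Es \<sigma> a f:] = skew_mult \<sigma> q [:-a,1:]" using qb by auto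
next
  fix b assume "\<exists>q. f - [:b:] = skew_mult \<sigma> q [:-a,1:]"
  then obtain q where "f - [:b:] = skew_mult \<sigma> q [:-a,1:]" by blast
  then have "Es \<sigma> a (f - [:b:]) = 0" using Es_skew_zero[OF a] by simp
  then show "b = Es \<sigma> a f" by (simp add: Es_diff Es_const)
qed

lemma ra_sum: "ring_automorphism \<sigma> \<Longrightarrow> \<sigma> (\<Sum>k<(m::nat). f k) = (\<Sum>k<m. \<sigma> (f k))"
  by (induction m) (simp_all add: ra_zero ra_add)

lemma Ns_conj:
  assumes a: "ring_automorphism \<sigma>" and x: "x \<noteq> 0"
  shows "Ns \<sigma> (\<sigma> x * inverse x) k = (\<sigma>^^k) x * inverse x"
proof (induction k)
  case 0 then show ?case using x by simp
next
  case (Suc k)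
  have ak: "ring_automorphism (\<sigma>^^k)" by (rule ra_pow[OF a])
  have nz: "(\<sigma>^^k) x \<noteq> 0" using ra_eq0[OF ak] x by simp
  have "Ns \<sigma> (\<sigma> x * inverse x) (Suc k) = (\<sigma>^^k) (\<sigma> x) * (inverse ((\<sigma>^^k) x) * (\<sigma>^^k) x) * inverse x"
    using Suc by (simp add: ra_mult[OF ak] ra_inverse[OF ak] mult.assoc)
  also have "\<dots> = (\<sigma>^^Suc k) x * inverse x" using nz by (simp add: funpow_swap1)
  finally show ?case .
qed

lemma Ns_Suc':
  assumes a: "ring_automorphism \<sigma>"
  shows "\<sigma> (Ns \<sigma> a k) * a = Ns \<sigma> a (Suc k)"
proof (induction k)
  case 0 then show ?case using ra_one[OF a] by simp
next
  case (Suc k)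
  have "\<sigma> (Ns \<sigma> a (Suc k)) * a = (\<sigma>^^Suc k) a * (\<sigma> (Ns \<sigma> a k) * a)"
    by (simp add: ra_mult[OF a] mult.assoc del: funpow.simps) (simp add: funpow_Suc_right)
  also have "\<dots> = Ns \<sigma> a (Suc (Suc k))" using Suc by simp
  finally show ?case .
qed

lemma funpow_mod:
  assumes "\<sigma> ^^ n = id"
  shows "\<sigma> ^^ k = \<sigma> ^^ (k mod n)"
proof -
  have "\<sigma> ^^ k = \<sigma> ^^ (k mod n + n * (k div n))" by simp
  also have "\<dots> = \<sigma> ^^ (k mod n) \<circ> (\<sigma> ^^ n) ^^ (k div n)" by (simp only: funpow_add funpow_mult)
  also have "\<dots> = \<sigma> ^^ (k mod n)" using assms by (simp add: id_funpow)
  finally show ?thesis .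
qed

lemma not_inner_diff:
  assumes a: "ring_automorphism \<sigma>" and n: "\<sigma> ^^ n = id"
    and ni: "\<forall>i. 1 \<le> i \<and> i < n \<longrightarrow> \<not> inner_automorphism (\<sigma> ^^ i)"
    and e: "e \<noteq> 0" and ij: "i < n" "j < n" "i \<noteq> j"
    and w: "\<And>w. (\<sigma>^^i) w = e * (\<sigma>^^j) w * inverse e"
  shows False
proof -
  define r where "r = (i + (n - j)) mod n"
  have r: "1 \<le> r \<and> r < n"
  proof (cases "j \<le> i")
    case True
    then have eq: "i + (n - j) = (i - j) + n" using ij by simp
    have "r = ((i - j) + n) mod n" unfolding r_def by (simp only: eq)
    also have "\<dots> = (i - j) mod n" by (rule mod_add_self2)
    also have "\<dots> = i - j" using ij by simp
    finally show ?thesis using ij True by arith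
  next
    case False
    have "r = i + (n - j)" unfolding r_def by (rule mod_less) (use ij False in linarith)
    then show ?thesis using ij False by arith
  qed
  have "inner_automorphism (\<sigma> ^^ r)"
    unfolding inner_automorphism_def
  proof (intro exI conjI allI)
    fix u
    define v where "v = (\<sigma>^^(n - j)) u"
    have "(\<sigma>^^j) v = (\<sigma>^^(j + (n - j))) u" by (simp add: v_def funpow_add)
    also have "\<dots> = u" using ij n by simp
    finally have 1: "(\<sigma>^^j) v = u" .
    have "(\<sigma>^^i) v = (\<sigma>^^(i + (n - j))) u" by (simp add: v_def funpow_add)
    also have "\<dots> = (\<sigma>^^r) u" unfolding r_def using funpow_mod[OF n] by metis
    finally have 2: "(\<sigma>^^i) v = (\<sigma>^^r) u" .
    show "(\<sigma>^^r) u = e * u * inverse e" using w[of v] 1 2 by simp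
  qed (rule e)
  then show False using ni r by blast
qed

lemma indep_left:
  assumes a: "ring_automorphism \<sigma>" and n: "\<sigma> ^^ n = id"
    and ni: "\<forall>i. 1 \<le> i \<and> i < n \<longrightarrow> \<not> inner_automorphism (\<sigma> ^^ i)"
  shows "(\<forall>z. (\<Sum>i<n. c i * (\<sigma>^^i) z) = 0) \<Longrightarrow> k < n \<Longrightarrow> c k = 0"
proof (induction "card {i. i < n \<and> c i \<noteq> 0}" arbitrary: c k rule: less_induct)
  case less
  show ?case
  proof (rule ccontr)
    assume ck: "c k \<noteq> 0"
    define c' where "c' i = inverse (c k) * c i" for i
    have c'k: "c' k = 1" using ck by (simp add: c'_def)
    have id': "(\<Sum>i<n. c' i * (\<sigma>^^i) z) = 0" for z
    proof -
      have "(\<Sum>i<n. c' i * (\<sigma>^^i) z) = inverse (c k) * (\<Sum>i<n. c i * (\<sigma>^^i) z)"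
        by (simp add: c'_def sum_distrib_left mult.assoc)
      then show ?thesis using less.prems(1) by simp
    qed
    show False
    proof (cases "\<exists>i<n. i \<noteq> k \<and> c i \<noteq> 0")
      case True
      then obtain i where i: "i < n" "i \<noteq> k" "c i \<noteq> 0" by blast
      have c'i: "c' i \<noteq> 0" using i ck by (simp add: c'_def)
      have key: "c' i * (\<sigma>^^i) w = (\<sigma>^^k) w * c' i" for w
      proof -
        define d where "d j = c' j * (\<sigma>^^j) w - (\<sigma>^^k) w * c' j" for j
        have "\<forall>z. (\<Sum>j<n. d j * (\<sigma>^^j) z) = 0"
        proof
          fix z
          have "(\<Sum>j<n. d j * (\<sigma>^^j) z) = (\<Sum>j<n. c' j * (\<sigma>^^j) (w * z))
               - (\<sigma>^^k) w * (\<Sum>j<n. c' j * (\<sigma>^^j) z)"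
            by (simp add: d_def left_diff_distrib sum_subtractf sum_distrib_left mult.assoc
                ra_mult[OF ra_pow[OF a]])
          also have "\<dots> = 0" using id' by simp
          finally show "(\<Sum>j<n. d j * (\<sigma>^^j) z) = 0" .
        qed
        moreover have "card {j. j < n \<and> d j \<noteq> 0} < card {j. j < n \<and> c j \<noteq> 0}"
        proof (rule psubset_card_mono)
          show "finite {j. j < n \<and> c j \<noteq> 0}" by simp
          have "{j. j < n \<and> d j \<noteq> 0} \<subseteq> {j. j < n \<and> c j \<noteq> 0} - {k}"
            using c'k by (auto simp: d_def c'_def)
          moreover have "k \<in> {j. j < n \<and> c j \<noteq> 0}" using less.prems(2) ck by simp
          ultimately show "{j. j < n \<and> d j \<noteq> 0} \<subset> {j. j < n \<and> c j \<noteq> 0}" by blast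
        qed
        ultimately have "d i = 0" using less.hyps i(1) by blast
        then show ?thesis by (simp add: d_def)
      qed
      have W: "(\<sigma>^^i) w = inverse (c' i) * (\<sigma>^^k) w * inverse (inverse (c' i))" for w
        using key[of w] c'i by (simp add: mult.assoc[symmetric]) (metis c'i divide_inverse left_inverse mult.assoc mult_1_left)
      have e: "inverse (c' i) \<noteq> 0" using c'i by simp
      show False by (rule not_inner_diff[OF a n ni e i(1) less.prems(2) i(2) W])
    next
      case False
      then have "(\<Sum>i<n. c i * (\<sigma>^^i) 1) = (\<Sum>i<n. if i = k then c k else 0)"
        by (intro sum.cong) (auto simp: ra_one[OF ra_pow[OF a]])
      also have "\<dots> = c k" using less.prems(2) by simp
      finally show False using less.prems(1) ck by simp
    qed
  qed
qed

lemma indep_right: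
  assumes a: "ring_automorphism \<sigma>" and n: "\<sigma> ^^ n = id"
    and ni: "\<forall>i. 1 \<le> i \<and> i < n \<longrightarrow> \<not> inner_automorphism (\<sigma> ^^ i)"
  shows "(\<forall>z. (\<Sum>i<n. (\<sigma>^^i) z * c i) = 0) \<Longrightarrow> k < n \<Longrightarrow> c k = 0"
proof (induction "card {i. i < n \<and> c i \<noteq> 0}" arbitrary: c k rule: less_induct)
  case less
  show ?case
  proof (rule ccontr)
    assume ck: "c k \<noteq> 0"
    define c' where "c' i = c i * inverse (c k)" for i
    have c'k: "c' k = 1" using ck by (simp add: c'_def)
    have id': "(\<Sum>i<n. (\<sigma>^^i) z * c' i) = 0" for z
    proof -
      have "(\<Sum>i<n. (\<sigma>^^i) z * c' i) = (\<Sum>i<n. (\<sigma>^^i) z * c i) * inverse (c k)"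
        by (simp add: c'_def sum_distrib_right mult.assoc)
      then show ?thesis using less.prems(1) by simp
    qed
    show False
    proof (cases "\<exists>i<n. i \<noteq> k \<and> c i \<noteq> 0")
      case True
      then obtain i where i: "i < n" "i \<noteq> k" "c i \<noteq> 0" by blast
      have c'i: "c' i \<noteq> 0" using i ck by (simp add: c'_def)
      have key: "(\<sigma>^^i) w * c' i = c' i * (\<sigma>^^k) w" for w
      proof -
        define d where "d j = (\<sigma>^^j) w * c' j - c' j * (\<sigma>^^k) w" for j
        have "\<forall>z. (\<Sum>j<n. (\<sigma>^^j) z * d j) = 0"
        proof
          fix z
          have "(\<Sum>j<n. (\<sigma>^^j) z * d j) = (\<Sum>j<n. (\<sigma>^^j) (z * w) * c' j)
               - (\<Sum>j<n. (\<sigma>^^j) z * c' j) * (\<sigma>^^k) w"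
            by (simp add: d_def right_diff_distrib sum_subtractf sum_distrib_right mult.assoc
                ra_mult[OF ra_pow[OF a]])
          also have "\<dots> = 0" using id' by simp
          finally show "(\<Sum>j<n. (\<sigma>^^j) z * d j) = 0" .
        qed
        moreover have "card {j. j < n \<and> d j \<noteq> 0} < card {j. j < n \<and> c j \<noteq> 0}"
        proof (rule psubset_card_mono)
          show "finite {j. j < n \<and> c j \<noteq> 0}" by simp
          have "{j. j < n \<and> d j \<noteq> 0} \<subseteq> {j. j < n \<and> c j \<noteq> 0} - {k}"
            using c'k by (auto simp: d_def c'_def)
          moreover have "k \<in> {j. j < n \<and> c j \<noteq> 0}" using less.prems(2) ck by simp
          ultimately show "{j. j < n \<and> d j \<noteq> 0} \<subset> {j. j < n \<and> c j \<noteq> 0}" by blast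
        qed
        ultimately have "d i = 0" using less.hyps i(1) by blast
        then show ?thesis by (simp add: d_def)
      qed
      have W: "(\<sigma>^^i) w = c' i * (\<sigma>^^k) w * inverse (c' i)" for w
        using key[of w] c'i by (metis mult.assoc mult.right_neutral right_inverse)
      have e: "c' i \<noteq> 0" using c'i by simp
      show False by (rule not_inner_diff[OF a n ni e i(1) less.prems(2) i(2) W])
    next
      case False
      then have "(\<Sum>i<n. (\<sigma>^^i) 1 * c i) = (\<Sum>i<n. if i = k then c k else 0)"
        by (intro sum.cong) (auto simp: ra_one[OF ra_pow[OF a]])
      also have "\<dots> = c k" using less.prems(2) by simp
      finally show False using less.prems(1) ck by simp
    qed
  qed
qed

lemma Es_lessThan: "degree f < N \<Longrightarrow> Es \<sigma> a f = (\<Sum>i<N. coeff f i * Ns \<sigma> a i)"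
  unfolding Es_def by (rule sum.mono_neutral_left) (auto simp: coeff_eq_0)

lemma part_a:
  assumes a: "ring_automorphism \<sigma>" and n1: "n \<ge> 1" and n: "\<sigma> ^^ n = id"
    and ni: "\<forall>i. 1 \<le> i \<and> i < n \<longrightarrow> \<not> inner_automorphism (\<sigma> ^^ i)"
  shows "{a. skew_eval \<sigma> (monom 1 n - [:1:]) a = 0} = Delta_sigma_1 \<sigma>
            \<and> (\<forall>f. f \<noteq> 0 \<and> degree f < n \<longrightarrow>
                   (\<exists>a\<in>Delta_sigma_1 \<sigma>. skew_eval \<sigma> f a \<noteq> 0))"
proof
  have ev: "skew_eval \<sigma> (monom 1 n - [:1:]) a = Ns \<sigma> a n - 1" for a
    by (simp add: skew_eval_eq[OF a] Es_diff Es_monom Es_const del: Ns.simps)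
  have sub1: "a \<in> Delta_sigma_1 \<sigma>" if N1: "Ns \<sigma> a n = 1" for a
  proof -
    define y where "y z = (\<Sum>k<n. (\<sigma>^^k) z * Ns \<sigma> a k)" for z
    obtain z where yz: "y z \<noteq> 0"
    proof -
      have "\<not> (\<forall>z. y z = 0)"
      proof
        assume "\<forall>z. y z = 0"
        then have "Ns \<sigma> a 0 = 0"
          using indep_right[OF a n ni, of "Ns \<sigma> a" 0] n1 unfolding y_def by simp
        then show False by simp
      qed
      then show ?thesis using that by blast
    qed
    define g where "g k = (\<sigma>^^k) z * Ns \<sigma> a k" for k
    have g0: "g 0 = z" by (simp add: g_def)
    have gn: "g n = z" using N1 n by (simp add: g_def)
    have shift: "(\<Sum>k<n. g (Suc k)) = (\<Sum>k<n. g k)"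
      using sum.lessThan_Suc_shift[of g n] sum.lessThan_Suc[of g n] g0 gn by (simp add: add.commute)
    have gs: "\<sigma> (g k) * a = g (Suc k)" for k
    proof -
      have "\<sigma> (g k) * a = \<sigma> ((\<sigma>^^k) z) * (\<sigma> (Ns \<sigma> a k) * a)"
        by (simp add: g_def ra_mult[OF a] mult.assoc)
      also have "\<dots> = g (Suc k)" unfolding g_def Ns_Suc'[OF a] by simp
      finally show ?thesis .
    qed
    have "\<sigma> (y z) * a = (\<Sum>k<n. \<sigma> (g k) * a)"
      by (simp add: y_def g_def ra_sum[OF a] sum_distrib_right)
    also have "\<dots> = y z" using shift gs by (simp add: y_def g_def)
    finally have fix1: "\<sigma> (y z) * a = y z" .
    have sy: "\<sigma> (y z) \<noteq> 0" using ra_eq0[OF a] yz by simp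
    have "a = inverse (\<sigma> (y z)) * y z"
      using fix1 sy by (metis left_inverse mult.assoc mult_1_left)
    also have "\<dots> = \<sigma> (inverse (y z)) * inverse (inverse (y z))"
      by (simp add: ra_inverse[OF a])
    finally have "a = \<sigma> (inverse (y z)) * inverse (inverse (y z))" .
    moreover have "inverse (y z) \<noteq> 0" using yz by simp
    ultimately show ?thesis unfolding Delta_sigma_1_def by blast
  qed
  have sub2: "Ns \<sigma> a n = 1" if A: "a \<in> Delta_sigma_1 \<sigma>" for a
  proof -
    obtain x where x: "x \<noteq> 0" "a = \<sigma> x * inverse x" using A by (auto simp: Delta_sigma_1_def)
    have "Ns \<sigma> a n = (\<sigma>^^n) x * inverse x" unfolding x(2) by (rule Ns_conj[OF a x(1)])
    also have "\<dots> = 1" using n x(1) by simp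
    finally show ?thesis .
  qed
  show "{a. skew_eval \<sigma> (monom 1 n - [:1:]) a = 0} = Delta_sigma_1 \<sigma>"
  proof (intro set_eqI iffI)
    fix a assume "a \<in> {a. skew_eval \<sigma> (monom 1 n - [:1:]) a = 0}"
    then have "Ns \<sigma> a n = 1" using ev[of a] by simp
    then show "a \<in> Delta_sigma_1 \<sigma>" by (rule sub1)
  next
    fix a assume "a \<in> Delta_sigma_1 \<sigma>"
    then have "Ns \<sigma> a n = 1" by (rule sub2)
    then show "a \<in> {a. skew_eval \<sigma> (monom 1 n - [:1:]) a = 0}" using ev[of a] by simp
  qed
next
  show "\<forall>f. f \<noteq> 0 \<and> degree f < n \<longrightarrow> (\<exists>a\<in>Delta_sigma_1 \<sigma>. skew_eval \<sigma> f a \<noteq> 0)"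
  proof (intro allI impI, rule ccontr)
    fix f assume f: "f \<noteq> 0 \<and> degree f < n" and
      nz: "\<not> (\<exists>a\<in>Delta_sigma_1 \<sigma>. skew_eval \<sigma> f a \<noteq> 0)"
    have Z: "\<forall>z. (\<Sum>i<n. coeff f i * (\<sigma>^^i) z) = 0"
    proof
      fix z
      show "(\<Sum>i<n. coeff f i * (\<sigma>^^i) z) = 0"
      proof (cases "z = 0")
        case True then show ?thesis by (simp add: ra_zero[OF ra_pow[OF a]])
      next
        case False
        have "\<sigma> z * inverse z \<in> Delta_sigma_1 \<sigma>" unfolding Delta_sigma_1_def using False by auto
        then have "skew_eval \<sigma> f (\<sigma> z * inverse z) = 0" using nz by blast
        then have E0: "Es \<sigma> (\<sigma> z * inverse z) f = 0" by (simp add: skew_eval_eq[OF a])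
        have "Es \<sigma> (\<sigma> z * inverse z) f = (\<Sum>i<n. coeff f i * ((\<sigma>^^i) z * inverse z))"
          using f by (simp add: Es_lessThan[of f n] Ns_conj[OF a False] del: Ns.simps)
        with E0 have "(\<Sum>i<n. coeff f i * ((\<sigma>^^i) z * inverse z)) = 0" by simp
        then have "(\<Sum>i<n. coeff f i * (\<sigma>^^i) z) * inverse z = 0"
          by (simp add: sum_distrib_right mult.assoc)
        then show ?thesis using False by simp
      qed
    qed
    have "f = 0"
    proof (rule poly_eqI)
      fix i
      show "coeff f i = coeff 0 i"
      proof (cases "i < n")
        case True then show ?thesis using indep_left[OF a n ni Z] by simp
      next
        case False then show ?thesis using f by (simp add: coeff_eq_0)
      qed
    qed
    then show False using f by simp
  qed
qed



lemma der_add: "derivation \<delta> \<Longrightarrow> \<delta> (x + y) = \<delta> x + \<delta> y"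
  by (simp add: derivation_def)
lemma der_mult: "derivation \<delta> \<Longrightarrow> \<delta> (x * y) = \<delta> x * y + x * \<delta> y"
  by (simp add: derivation_def)
lemma der_zero: "derivation \<delta> \<Longrightarrow> \<delta> 0 = 0"
  using der_add[of \<delta> 0 0] by simp
lemma der_one: "derivation \<delta> \<Longrightarrow> \<delta> 1 = 0"
  using der_mult[of \<delta> 1 1] by simp
lemma der_minus: "derivation \<delta> \<Longrightarrow> \<delta> (- x) = - \<delta> x"
  using der_add[of \<delta> x "-x"] der_zero[of \<delta>] by (simp add: minus_unique)
lemma der_pow_zero: "derivation \<delta> \<Longrightarrow> (\<delta>^^k) 0 = 0"
  by (induction k) (simp_all add: der_zero)
lemma der_pow_add: "derivation \<delta> \<Longrightarrow> (\<delta>^^k) (x + y) = (\<delta>^^k) x + (\<delta>^^k) y"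
  by (induction k) (simp_all add: der_add)
lemma der_pow_minus: "derivation \<delta> \<Longrightarrow> (\<delta>^^k) (- x) = - (\<delta>^^k) x"
  by (induction k) (simp_all add: der_minus)
lemma der_pow_one: "derivation \<delta> \<Longrightarrow> (\<delta>^^k) 1 = (if k = 0 then 1 else 0)"
proof (induction k)
  case 0 then show ?case by simp
next
  case (Suc k) then show ?case by (cases k) (simp_all add: der_one der_zero)
qed
lemma der_of_nat: "derivation \<delta> \<Longrightarrow> \<delta> (of_nat m) = 0"
  by (induction m) (simp_all add: der_zero der_add der_one)
lemma der_of_nat_mult: "derivation \<delta> \<Longrightarrow> \<delta> (of_nat m * x) = of_nat m * \<delta> x"
  by (simp add: der_mult der_of_nat)
lemma der_sum: "derivation \<delta> \<Longrightarrow> \<delta> (\<Sum>k\<in>A. f k) = (\<Sum>k\<in>A. \<delta> (f k))"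
  by (induction A rule: infinite_finite_induct) (simp_all add: der_zero der_add)

lemma diff_mult_expand:
  assumes d: "derivation \<delta>"
  shows "diff_mult \<delta> p [:-a,1:] = (\<Sum>i\<le>degree p.
     (\<Sum>k\<le>i. monom (coeff p i * of_nat (i choose k) * (\<delta>^^(i-k)) (-a)) k) + monom (coeff p i) (Suc i))"
proof -
  have inner: "(\<Sum>k\<le>i. monom (coeff p i * of_nat (i choose k) * (\<delta>^^(i-k)) 1) (Suc k))
        = monom (coeff p i) (Suc i)" for i
  proof -
    have "(\<Sum>k\<le>i. monom (coeff p i * of_nat (i choose k) * (\<delta>^^(i-k)) 1) (Suc k))
        = (\<Sum>k\<le>i. if k = i then monom (coeff p i) (Suc i) else 0)"
      by (rule sum.cong) (auto simp: der_pow_one[OF d])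
    then show ?thesis by simp
  qed
  show ?thesis unfolding diff_mult_def
    by (simp add: numeral_2_eq_2 inner sum.distrib)
qed

lemma diff_coeff:
  assumes d: "derivation \<delta>"
  shows "coeff (diff_mult \<delta> p [:-a,1:]) m = (if m = 0 then 0 else coeff p (m-1))
      - (\<Sum>i\<le>degree p. coeff p i * of_nat (i choose m) * (\<delta>^^(i-m)) a)"
proof -
  have A: "coeff (\<Sum>k\<le>i. monom (coeff p i * of_nat (i choose k) * (\<delta>^^(i-k)) (-a)) k) m
      = - (coeff p i * of_nat (i choose m) * (\<delta>^^(i-m)) a)" for i
    by (auto simp: coeff_sum der_pow_minus[OF d] binomial_eq_0)
  have B: "(\<Sum>i\<le>degree p. coeff (monom (coeff p i) (Suc i)) m) = (if m = 0 then 0 else coeff p (m-1))"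
  proof (cases m)
    case 0 then show ?thesis by simp
  next
    case (Suc m') then show ?thesis by (auto simp: coeff_eq_0)
  qed
  have C: "coeff (diff_mult \<delta> p [:-a,1:]) m
     = (\<Sum>i\<le>degree p. coeff (\<Sum>k\<le>i. monom (coeff p i * of_nat (i choose k) * (\<delta>^^(i-k)) (-a)) k) m)
     + (\<Sum>i\<le>degree p. coeff (monom (coeff p i) (Suc i)) m)"
    unfolding diff_mult_expand[OF d] coeff_sum[of _ "{..degree p}"] coeff_add sum.distrib ..
  show ?thesis unfolding C A B by (simp add: sum_negf)
qed

lemma diff_coeff_bound:
  assumes d: "derivation \<delta>" and N: "degree p \<le> N"
  shows "coeff (diff_mult \<delta> p [:-a,1:]) m = (if m = 0 then 0 else coeff p (m-1))
      - (\<Sum>i\<le>N. coeff p i * of_nat (i choose m) * (\<delta>^^(i-m)) a)"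
proof -
  have "(\<Sum>i\<le>degree p. coeff p i * of_nat (i choose m) * (\<delta>^^(i-m)) a)
      = (\<Sum>i\<le>N. coeff p i * of_nat (i choose m) * (\<delta>^^(i-m)) a)"
    using N by (intro sum.mono_neutral_left) (auto simp: coeff_eq_0)
  then show ?thesis by (simp add: diff_coeff[OF d])
qed

lemma diff_mult_zero: "diff_mult \<delta> 0 r = 0" by (simp add: diff_mult_def)

lemma diff_mult_add: "derivation \<delta> \<Longrightarrow>
   diff_mult \<delta> (p + q) [:-a,1:] = diff_mult \<delta> p [:-a,1:] + diff_mult \<delta> q [:-a,1:]"
proof (rule poly_eqI)
  fix m assume d: "derivation \<delta>"
  let ?N = "max (degree p) (degree q)"
  have "degree (p + q) \<le> ?N" by (rule degree_add_le_max)
  then show "coeff (diff_mult \<delta> (p + q) [:-a,1:]) m = coeff (diff_mult \<delta> p [:-a,1:] + diff_mult \<delta> q [:-a,1:]) m"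
    by (simp add: diff_coeff_bound[OF d, of _ ?N] distrib_right sum.distrib algebra_simps)
qed

lemma sum_choose_big: "N < m \<Longrightarrow> (\<Sum>i\<le>N. f i * of_nat (i choose m) * g i) = 0"
  by (rule sum.neutral) (auto simp: binomial_eq_0)

lemma diff_degree: "derivation \<delta> \<Longrightarrow> degree (diff_mult \<delta> q [:-a,1:]) \<le> Suc (degree q)"
  by (rule degree_le) (auto simp: diff_coeff_bound[of _ q "degree q"] coeff_eq_0 sum_choose_big)

lemma diff_div_exists: "derivation \<delta> \<Longrightarrow> \<exists>q b. f = diff_mult \<delta> q [:-a,1:] + [:b:]"
proof (induction "degree f" arbitrary: f rule: less_induct)
  case less
  show ?case
  proof (cases "degree f = 0")
    case True
    then obtain b where "f = [:b:]" using degree0_coeffs by blast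
    then show ?thesis by (intro exI[of _ 0] exI[of _ b]) (simp add: diff_mult_zero)
  next
    case False
    define d where "d = degree f"
    define c where "c = coeff f d"
    define g where "g = f - diff_mult \<delta> (monom c (d - 1)) [:-a,1:]"
    have d0: "d > 0" using False d_def by simp
    have S: "(\<Sum>i\<le>d - 1. coeff (monom c (d - 1)) i * of_nat (i choose m) * (\<delta>^^(i-m)) a) = 0"
      if "m \<ge> d" for m
      using that d0 by (intro sum_choose_big) simp
    have "degree g \<le> d - 1"
    proof (rule degree_le, intro allI impI)
      fix m assume m: "m > d - 1"
      then have md: "m \<ge> d" using d0 by linarith
      have cf: "coeff g m = coeff f m - (if m = 0 then 0 else coeff (monom c (d - 1)) (m - 1))"
        unfolding g_def coeff_diff diff_coeff_bound[OF less.prems degree_monom_le] S[OF md] by simp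
      show "coeff g m = 0"
      proof (cases "m = d")
        case True
        then show ?thesis using d0 unfolding cf c_def by auto
      next
        case False
        then have "m > d" using md by simp
        then show ?thesis using d0 unfolding cf c_def by (auto simp: coeff_eq_0 d_def)
      qed
    qed
    then have "degree g < degree f" using False d_def by linarith
    then obtain q b where "g = diff_mult \<delta> q [:-a,1:] + [:b:]" using less.hyps[OF _ less.prems] by blast
    then have "f = diff_mult \<delta> (q + monom c (d-1)) [:-a,1:] + [:b:]"
      unfolding g_def by (simp add: diff_mult_add[OF less.prems] algebra_simps)
    then show ?thesis by blast
  qed
qed

fun Nd :: "('a::division_ring \<Rightarrow> 'a) \<Rightarrow> 'a \<Rightarrow> nat \<Rightarrow> 'a" where
  "Nd \<delta> a 0 = 1"
| "Nd \<delta> a (Suc k) = \<delta> (Nd \<delta> a k) + Nd \<delta> a k * a"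

definition Ed :: "('a::division_ring \<Rightarrow> 'a) \<Rightarrow> 'a \<Rightarrow> 'a poly \<Rightarrow> 'a" where
  "Ed \<delta> a f = (\<Sum>i\<le>degree f. coeff f i * Nd \<delta> a i)"

lemma Ed_bound: "degree f \<le> N \<Longrightarrow> Ed \<delta> a f = (\<Sum>i\<le>N. coeff f i * Nd \<delta> a i)"
  unfolding Ed_def by (rule sum.mono_neutral_left) (auto simp: coeff_eq_0)

lemma Ed_add: "Ed \<delta> a (f + g) = Ed \<delta> a f + Ed \<delta> a g"
proof -
  let ?N = "max (degree f) (degree g)"
  have "degree (f + g) \<le> ?N" by (rule degree_add_le_max)
  then show ?thesis
    by (simp add: Ed_bound[of _ ?N] distrib_right sum.distrib)
qed

lemma Ed_diff: "Ed \<delta> a (f - g) = Ed \<delta> a f - Ed \<delta> a g"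
proof -
  let ?N = "max (degree f) (degree g)"
  have "degree (f - g) \<le> ?N" by (rule degree_diff_le_max)
  then show ?thesis
    by (simp add: Ed_bound[of _ ?N] left_diff_distrib sum_subtractf)
qed

lemma Ed_const: "Ed \<delta> a [:b:] = b" by (simp add: Ed_def)

lemma Ed_monom: "Ed \<delta> a (monom c n) = c * Nd \<delta> a n"
proof -
  have "Ed \<delta> a (monom c n) = (\<Sum>i\<le>n. (if n = i then c * Nd \<delta> a n else 0))"
    by (rule trans[OF Ed_bound[OF degree_monom_le]], rule sum.cong) auto
  then show ?thesis by simp
qed

definition Lop :: "('a::division_ring \<Rightarrow> 'a) \<Rightarrow> 'a \<Rightarrow> 'a \<Rightarrow> 'a" where
  "Lop \<delta> a y = \<delta> y + y * a"

lemma Lop_mult: "derivation \<delta> \<Longrightarrow> Lop \<delta> a (c * y) = \<delta> c * y + c * Lop \<delta> a y"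
  by (simp add: Lop_def der_mult algebra_simps)

lemma Lop_add: "derivation \<delta> \<Longrightarrow> Lop \<delta> a (x + y) = Lop \<delta> a x + Lop \<delta> a y"
  by (simp add: Lop_def der_add algebra_simps)

lemma Lop_zero: "derivation \<delta> \<Longrightarrow> Lop \<delta> a 0 = 0"
  by (simp add: Lop_def der_zero)

lemma Lop_sum: "derivation \<delta> \<Longrightarrow> Lop \<delta> a (\<Sum>k\<in>A. f k) = (\<Sum>k\<in>A. Lop \<delta> a (f k))"
  by (induction A rule: infinite_finite_induct) (simp_all add: Lop_add Lop_zero)

lemma leibniz:
  assumes d: "derivation \<delta>"
  shows "(Lop \<delta> a ^^ r) (c * y) = (\<Sum>k\<le>r. of_nat (r choose k) * (\<delta>^^(r-k)) c * (Lop \<delta> a ^^ k) y)"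
proof (induction r)
  case 0 then show ?case by simp
next
  case (Suc r)
  define L where "L = Lop \<delta> a"
  define F where "F k = of_nat (r choose k) * (\<delta>^^(Suc r - k)) c * (L ^^ k) y" for k
  define G where "G k = of_nat (r choose k) * (\<delta>^^(r - k)) c * (L ^^ Suc k) y" for k
  define H where "H k = of_nat (Suc r choose k) * (\<delta>^^(Suc r - k)) c * (L ^^ k) y" for k
  have step: "L (of_nat (r choose k) * (\<delta>^^(r-k)) c * (L ^^ k) y) = F k + G k" if "k \<le> r" for k
  proof -
    have "L (of_nat (r choose k) * (\<delta>^^(r-k)) c * (L ^^ k) y)
        = \<delta> (of_nat (r choose k) * (\<delta>^^(r-k)) c) * (L ^^ k) y
          + of_nat (r choose k) * (\<delta>^^(r-k)) c * L ((L ^^ k) y)"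
      unfolding L_def by (rule Lop_mult[OF d])
    also have "\<delta> (of_nat (r choose k) * (\<delta>^^(r-k)) c) = of_nat (r choose k) * (\<delta>^^(Suc r - k)) c"
      using that by (simp add: der_of_nat_mult[OF d] Suc_diff_le)
    finally show ?thesis unfolding F_def G_def by simp
  qed
  have "(Lop \<delta> a ^^ Suc r) (c * y) = L (\<Sum>k\<le>r. of_nat (r choose k) * (\<delta>^^(r-k)) c * (L ^^ k) y)"
    using Suc by (simp add: L_def)
  also have "\<dots> = (\<Sum>k\<le>r. F k + G k)"
    unfolding L_def Lop_sum[OF d] using step unfolding L_def by (intro sum.cong) auto
  also have "\<dots> = (\<Sum>k\<le>r. F k) + (\<Sum>k\<le>r. G k)" by (rule sum.distrib)
  also have "\<dots> = (\<Sum>k\<le>Suc r. H k)"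
  proof -
    have HS: "H (Suc k) = G k + F (Suc k)" for k
      unfolding H_def G_def F_def by (simp add: distrib_right)
    have "(\<Sum>k\<le>Suc r. H k) = H 0 + (\<Sum>k\<le>r. H (Suc k))" by (rule sum.atMost_Suc_shift)
    also have "(\<Sum>k\<le>r. H (Suc k)) = (\<Sum>k\<le>r. G k) + (\<Sum>k\<le>r. F (Suc k))"
      by (simp only: HS sum.distrib)
    finally have "(\<Sum>k\<le>Suc r. H k) = H 0 + ((\<Sum>k\<le>r. G k) + (\<Sum>k\<le>r. F (Suc k)))" .
    moreover have "(\<Sum>k\<le>Suc r. F k) = F 0 + (\<Sum>k\<le>r. F (Suc k))" by (rule sum.atMost_Suc_shift)
    moreover have "(\<Sum>k\<le>Suc r. F k) = (\<Sum>k\<le>r. F k)" by (simp add: F_def binomial_eq_0)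
    moreover have "H 0 = F 0" by (simp add: H_def F_def)
    ultimately show ?thesis by (simp add: algebra_simps)
  qed
  finally show ?case by (simp add: H_def L_def)
qed

lemma Nd_Lop: "Nd \<delta> a k = (Lop \<delta> a ^^ k) 1"
  by (induction k) (simp_all add: Lop_def)

lemma Nd_rec:
  assumes d: "derivation \<delta>"
  shows "Nd \<delta> a (Suc i) = (\<Sum>m\<le>i. of_nat (i choose m) * (\<delta>^^(i-m)) a * Nd \<delta> a m)"
proof -
  have "Nd \<delta> a (Suc i) = (Lop \<delta> a ^^ i) (Lop \<delta> a 1)" by (simp add: Nd_Lop funpow_swap1)
  also have "Lop \<delta> a 1 = a * 1" using der_one[OF d] by (simp add: Lop_def)
  finally have "Nd \<delta> a (Suc i) = (Lop \<delta> a ^^ i) (a * 1)" .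
  then show ?thesis unfolding leibniz[OF d] Nd_Lop by simp
qed

lemma Ed_diff_zero:
  assumes d: "derivation \<delta>"
  shows "Ed \<delta> a (diff_mult \<delta> q [:-a,1:]) = 0"
proof -
  let ?D = "Suc (degree q)"
  define T where "T i m = of_nat (i choose m) * (\<delta>^^(i-m)) a * Nd \<delta> a m" for i m
  have "Ed \<delta> a (diff_mult \<delta> q [:-a,1:]) = (\<Sum>m\<le>?D. coeff (diff_mult \<delta> q [:-a,1:]) m * Nd \<delta> a m)"
    by (rule Ed_bound[OF diff_degree[OF d]])
  also have "\<dots> = (\<Sum>m\<le>?D. (if m=0 then 0 else coeff q (m-1)) * Nd \<delta> a m)
        - (\<Sum>m\<le>?D. (\<Sum>i\<le>degree q. coeff q i * of_nat (i choose m) * (\<delta>^^(i-m)) a) * Nd \<delta> a m)"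
    by (simp add: diff_coeff[OF d] left_diff_distrib sum_subtractf)
  also have "(\<Sum>m\<le>?D. (if m=0 then 0 else coeff q (m-1)) * Nd \<delta> a m)
      = (\<Sum>i\<le>degree q. coeff q i * Nd \<delta> a (Suc i))"
    by (simp only: sum.atMost_Suc_shift) simp
  also have "\<dots> = (\<Sum>i\<le>degree q. coeff q i * (\<Sum>m\<le>i. T i m))"
    by (simp only: Nd_rec[OF d] T_def)
  also have "(\<Sum>m\<le>?D. (\<Sum>i\<le>degree q. coeff q i * of_nat (i choose m) * (\<delta>^^(i-m)) a) * Nd \<delta> a m)
      = (\<Sum>m\<le>?D. \<Sum>i\<le>degree q. coeff q i * T i m)"
    by (simp add: sum_distrib_right T_def mult.assoc)
  also have "\<dots> = (\<Sum>i\<le>degree q. \<Sum>m\<le>?D. coeff q i * T i m)" by (rule sum.swap)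
  also have "\<dots> = (\<Sum>i\<le>degree q. coeff q i * (\<Sum>m\<le>?D. T i m))" by (simp only: sum_distrib_left)
  also have "\<dots> = (\<Sum>i\<le>degree q. coeff q i * (\<Sum>m\<le>i. T i m))"
  proof (rule sum.cong)
    fix i assume "i \<in> {..degree q}"
    then have "(\<Sum>m\<le>?D. T i m) = (\<Sum>m\<le>i. T i m)"
      by (intro sum.mono_neutral_right) (auto simp: T_def binomial_eq_0)
    then show "coeff q i * (\<Sum>m\<le>?D. T i m) = coeff q i * (\<Sum>m\<le>i. T i m)" by simp
  qed simp
  finally show ?thesis by simp
qed

lemma diff_eval_eq:
  assumes d: "derivation \<delta>"
  shows "diff_eval \<delta> f a = Ed \<delta> a f"
  unfolding diff_eval_def
proof (rule the_equality)
  obtain q b where qb: "f = diff_mult \<delta> q [:-a,1:] + [:b:]" using diff_div_exists[OF d] by blast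
  have "Ed \<delta> a f = b" by (subst qb) (simp add: Ed_add Ed_diff_zero[OF d] Ed_const)
  then show "\<exists>q. f - [:Ed \<delta> a f:] = diff_mult \<delta> q [:-a,1:]" using qb by auto
next
  fix b assume "\<exists>q. f - [:b:] = diff_mult \<delta> q [:-a,1:]"
  then obtain q where "f - [:b:] = diff_mult \<delta> q [:-a,1:]" by blast
  then have "Ed \<delta> a (f - [:b:]) = 0" using Ed_diff_zero[OF d] by simp
  then show "b = Ed \<delta> a f" by (simp add: Ed_diff Ed_const)
qed

lemma der_inverse:
  assumes d: "derivation \<delta>" and y: "y \<noteq> 0"
  shows "\<delta> (inverse y) = - (inverse y * \<delta> y * inverse y)"
proof -
  have "0 = \<delta> (y * inverse y)" using y der_one[OF d] by simp
  also have "\<dots> = \<delta> y * inverse y + y * \<delta> (inverse y)" by (rule der_mult[OF d])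
  finally have "y * \<delta> (inverse y) = - (\<delta> y * inverse y)" by (simp add: eq_neg_iff_add_eq_0 add.commute)
  then have "inverse y * (y * \<delta> (inverse y)) = inverse y * (- (\<delta> y * inverse y))" by simp
  then show ?thesis using y by (simp add: mult.assoc[symmetric])
qed

lemma Nd_conj:
  assumes d: "derivation \<delta>" and x: "x \<noteq> 0"
  shows "Nd \<delta> (\<delta> x * inverse x) k * x = (\<delta>^^k) x"
proof (induction k)
  case 0 then show ?case by simp
next
  case (Suc k)
  let ?a = "\<delta> x * inverse x"
  have "Nd \<delta> ?a (Suc k) * x = \<delta> (Nd \<delta> ?a k) * x + Nd \<delta> ?a k * (?a * x)"
    by (simp add: distrib_right mult.assoc)
  also have "?a * x = \<delta> x" using x by (simp add: mult.assoc)
  also have "\<delta> (Nd \<delta> ?a k) * x + Nd \<delta> ?a k * \<delta> x = \<delta> (Nd \<delta> ?a k * x)" by (simp add: der_mult[OF d])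
  also have "\<dots> = (\<delta>^^Suc k) x" using Suc by simp
  finally show ?case .
qed

lemma part_b:
  assumes d: "derivation \<delta>" and z: "\<delta> ^^ N = (\<lambda>_. 0)"
    and hyp: "\<forall>m c. m < N \<and> (\<forall>x. (\<Sum>i\<le>m. c i * (\<delta> ^^ i) x) = 0) \<longrightarrow> (\<forall>i\<le>m. c i = 0)"
  shows "{a. diff_eval \<delta> (monom 1 N) a = 0} = Delta_delta_0 \<delta>
            \<and> (\<forall>f. f \<noteq> 0 \<and> degree f < N \<longrightarrow>
                   (\<exists>a\<in>Delta_delta_0 \<delta>. diff_eval \<delta> f a \<noteq> 0))"
proof
  have ev: "diff_eval \<delta> (monom 1 N) a = Nd \<delta> a N" for a
    by (simp add: diff_eval_eq[OF d] Ed_monom del: Nd.simps)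
  have sub1: "a \<in> Delta_delta_0 \<delta>" if N0: "Nd \<delta> a N = 0" for a
  proof -
    have "\<exists>k. Nd \<delta> a k \<noteq> 0 \<and> Nd \<delta> a (Suc k) = 0"
    proof (rule ccontr)
      assume H: "\<not> (\<exists>k. Nd \<delta> a k \<noteq> 0 \<and> Nd \<delta> a (Suc k) = 0)"
      have "Nd \<delta> a k \<noteq> 0" for k
      proof (induction k)
        case 0 then show ?case by simp
      next
        case (Suc k) then show ?case using H by blast
      qed
      then show False using N0 by blast
    qed
    then obtain k where k: "Nd \<delta> a k \<noteq> 0" "Nd \<delta> a (Suc k) = 0" by blast
    define y where "y = Nd \<delta> a k"
    have y0: "y \<noteq> 0" using k y_def by simp
    have dy: "\<delta> y = - (y * a)" using k(2) unfolding y_def by (simp add: eq_neg_iff_add_eq_0)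
    have "\<delta> (inverse y) * inverse (inverse y) = - (inverse y * \<delta> y * inverse y) * y"
      using der_inverse[OF d y0] by simp
    also have "\<dots> = - (inverse y * \<delta> y)" using y0 by (simp add: mult.assoc)
    also have "\<dots> = inverse y * y * a" unfolding dy by (simp add: mult.assoc)
    also have "\<dots> = a" using y0 by simp
    finally have "a = \<delta> (inverse y) * inverse (inverse y)" by simp
    moreover have "inverse y \<noteq> 0" using y0 by simp
    ultimately show ?thesis unfolding Delta_delta_0_def by blast
  qed
  have sub2: "Nd \<delta> a N = 0" if A: "a \<in> Delta_delta_0 \<delta>" for a
  proof -
    obtain x where x: "x \<noteq> 0" "a = \<delta> x * inverse x" using A by (auto simp: Delta_delta_0_def)
    have "Nd \<delta> a N * x = (\<delta>^^N) x" unfolding x(2) by (rule Nd_conj[OF d x(1)])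
    also have "\<dots> = 0" using z by simp
    finally show ?thesis using x(1) by simp
  qed
  show "{a. diff_eval \<delta> (monom 1 N) a = 0} = Delta_delta_0 \<delta>"
  proof (intro set_eqI iffI)
    fix a assume "a \<in> {a. diff_eval \<delta> (monom 1 N) a = 0}"
    then have "Nd \<delta> a N = 0" using ev[of a] by simp
    then show "a \<in> Delta_delta_0 \<delta>" by (rule sub1)
  next
    fix a assume "a \<in> Delta_delta_0 \<delta>"
    then have "Nd \<delta> a N = 0" by (rule sub2)
    then show "a \<in> {a. diff_eval \<delta> (monom 1 N) a = 0}" using ev[of a] by simp
  qed
next
  show "\<forall>f. f \<noteq> 0 \<and> degree f < N \<longrightarrow> (\<exists>a\<in>Delta_delta_0 \<delta>. diff_eval \<delta> f a \<noteq> 0)"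
  proof (intro allI impI, rule ccontr)
    fix f assume f: "f \<noteq> 0 \<and> degree f < N" and
      nz: "\<not> (\<exists>a\<in>Delta_delta_0 \<delta>. diff_eval \<delta> f a \<noteq> 0)"
    have Z: "\<forall>x. (\<Sum>i\<le>degree f. coeff f i * (\<delta>^^i) x) = 0"
    proof
      fix x
      show "(\<Sum>i\<le>degree f. coeff f i * (\<delta>^^i) x) = 0"
      proof (cases "x = 0")
        case True then show ?thesis by (simp add: der_pow_zero[OF d])
      next
        case False
        have "\<delta> x * inverse x \<in> Delta_delta_0 \<delta>" unfolding Delta_delta_0_def using False by auto
        then have "diff_eval \<delta> f (\<delta> x * inverse x) = 0" using nz by blast
        then have "Ed \<delta> (\<delta> x * inverse x) f * x = 0" by (simp add: diff_eval_eq[OF d])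
        moreover have "Ed \<delta> (\<delta> x * inverse x) f * x = (\<Sum>i\<le>degree f. coeff f i * (\<delta>^^i) x)"
          unfolding Ed_def sum_distrib_right by (simp add: mult.assoc Nd_conj[OF d False] del: Nd.simps)
        ultimately show ?thesis by simp
      qed
    qed
    then have "\<forall>i\<le>degree f. coeff f i = 0" using hyp f by blast
    then have "coeff f (degree f) = 0" by simp
    then show False using f by simp
  qed
qed


theorem proposition2p9:
  shows "(\<forall>(\<sigma> :: 'a::division_ring \<Rightarrow> 'a) (n::nat).
            ring_automorphism \<sigma> \<and> n \<ge> 1 \<and> \<sigma> ^^ n = id
            \<and> (\<forall>i. 1 \<le> i \<and> i < n \<longrightarrow> \<sigma> ^^ i \<noteq> id)
            \<and> (\<forall>i. 1 \<le> i \<and> i < n \<longrightarrow> \<not> inner_automorphism (\<sigma> ^^ i))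
          \<longrightarrow> {a. skew_eval \<sigma> (monom 1 n - [:1:]) a = 0} = Delta_sigma_1 \<sigma>
            \<and> (\<forall>f. f \<noteq> 0 \<and> degree f < n \<longrightarrow>
                   (\<exists>a\<in>Delta_sigma_1 \<sigma>. skew_eval \<sigma> f a \<noteq> 0)))
       \<and> (\<forall>(\<delta> :: 'b::division_ring \<Rightarrow> 'b) (p::nat) (n::nat).
            CHAR('b) = p \<and> p > 0 \<and> derivation \<delta> \<and> \<delta> ^^ (p ^ n) = (\<lambda>_. 0)
            \<and> (\<forall>m c. m < p ^ n \<and> (\<forall>x. (\<Sum>i\<le>m. c i * (\<delta> ^^ i) x) = 0)
                      \<longrightarrow> (\<forall>i\<le>m. c i = 0))
          \<longrightarrow> {a. diff_eval \<delta> (monom 1 (p ^ n)) a = 0} = Delta_delta_0 \<delta>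
            \<and> (\<forall>f. f \<noteq> 0 \<and> degree f < p ^ n \<longrightarrow>
                   (\<exists>a\<in>Delta_delta_0 \<delta>. diff_eval \<delta> f a \<noteq> 0)))"
  apply (rule conjI)
   apply (intro allI impI, elim conjE)
   apply (rule part_a; assumption)
  apply (intro allI impI, elim conjE)
  apply (rule part_b; assumption)
  done

end
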